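(* Assume the rank-1 setting described in the context and that Assumption 3 holds. Then for all sufficiently large $n$, for every $C\subseteq V$ with $|C|=r$, every maximizer $D^\star_C$ of $\frac{\mathbb{E}_0[e(D)]}{|D|\log(n/|D|)}$ over nonempty $D\subseteq C$ satisfies $|D^\star_C|\ge r^{1/3}$.
   Context: Rank-1 setting. For each $n$ let $V=\{1,\dots,n\}$ with vertex weights $\theta_i\in(0,1)$ and edge probabilities $p_{ij}=\theta_i\theta_j$ ($i\ne j$). Under $\mathbb{P}_0$ the adjacency entries $A_{ij}$ ($i<j$) of a random simple graph on $V$ are independent $\mathrm{Bern}(p_{ij})$, so that $\mathbb{E}_0[e(D)]=\sum_{i<j,\ i,j\in D}\theta_i\theta_j$, where $e(D)$ is the number of edges inside $D$. $r=r_n$ is a community size. All quantities may depend on $n$, and asymptotics are as $n\to\infty$. Assumption 3. With $\theta_{\max}=\max_i\theta_i$ and $\theta_{\min}=\min_i\theta_i$: $(\theta_{\max}/\theta_{\min})^2=o\big(r^{2/3}\wedge\frac nr\theta_{\min}^2\big)$. *)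

theory Defs
  imports Complex_Main "HOL-Library.Landau_Symbols"
begin

text \<open>Rank-1 setting: for each n, vertex weights theta n i for i in V = {1..n}.\<close>

definition theta_max :: "(nat \<Rightarrow> nat \<Rightarrow> real) \<Rightarrow> nat \<Rightarrow> real" where
  "theta_max theta n = Max (theta n ` {1..n})"

definition theta_min :: "(nat \<Rightarrow> nat \<Rightarrow> real) \<Rightarrow> nat \<Rightarrow> real" where
  "theta_min theta n = Min (theta n ` {1..n})"

text \<open>Expected number of edges inside D under P_0: sum over i<j in D of theta_i theta_j.\<close>
definition exp_edges :: "(nat \<Rightarrow> nat \<Rightarrow> real) \<Rightarrow> nat \<Rightarrow> nat set \<Rightarrow> real" where
  "exp_edges theta n D = (\<Sum>(i,j)\<in>{(i,j). i \<in> D \<and> j \<in> D \<and> i < j}. theta n i * theta n j)"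

definition objective :: "(nat \<Rightarrow> nat \<Rightarrow> real) \<Rightarrow> nat \<Rightarrow> nat set \<Rightarrow> real" where
  "objective theta n D = exp_edges theta n D / (real (card D) * ln (real n / real (card D)))"

definition is_maximizer :: "(nat \<Rightarrow> nat \<Rightarrow> real) \<Rightarrow> nat \<Rightarrow> nat set \<Rightarrow> nat set \<Rightarrow> bool" where
  "is_maximizer theta n C D \<longleftrightarrow> D \<subseteq> C \<and> D \<noteq> {} \<and>
     (\<forall>D'. D' \<subseteq> C \<and> D' \<noteq> {} \<longrightarrow> objective theta n D' \<le> objective theta n D)"

end

theory Submission imports Defs begin

lemma card_pairs:
  assumes "finite D"
  shows "2 * card {(i,j). i \<in> D \<and> j \<in> D \<and> (i::nat) < j} + card D = card D * card D"
proof -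
  define P where "P = {(i,j). i \<in> D \<and> j \<in> D \<and> (i::nat) < j}"
  define Q where "Q = {(i,j). i \<in> D \<and> j \<in> D \<and> (j::nat) < i}"
  define T where "T = (\<lambda>i. (i,i)) ` D"
  have fP: "finite P" unfolding P_def
    by (rule finite_subset[of _ "D \<times> D"]) (use assms in auto)
  have fQ: "finite Q" unfolding Q_def
    by (rule finite_subset[of _ "D \<times> D"]) (use assms in auto)
  have fT: "finite T" using assms unfolding T_def by simp
  have DD: "D \<times> D = (P \<union> Q) \<union> T" unfolding P_def Q_def T_def by auto
  have cQ: "card Q = card P"
  proof -
    have "Q = (\<lambda>(i,j). (j,i)) ` P" unfolding P_def Q_def by auto
    moreover have "inj_on (\<lambda>(i,j). (j,i)) P" by (auto simp: inj_on_def)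
    ultimately show ?thesis by (simp add: card_image)
  qed
  have cT: "card T = card D" unfolding T_def by (simp add: card_image inj_on_def)
  have "card (D \<times> D) = card (P \<union> Q) + card T"
    unfolding DD by (rule card_Un_disjoint) (use fP fQ fT in \<open>auto simp: P_def Q_def T_def\<close>)
  also have "card (P \<union> Q) = card P + card Q"
    by (rule card_Un_disjoint) (use fP fQ in \<open>auto simp: P_def Q_def\<close>)
  finally show ?thesis using cQ cT by (simp add: card_cartesian_product P_def)
qed

lemma exp_edges_bounds:
  assumes th: "\<And>n i. i \<in> {1..n} \<Longrightarrow> 0 < theta n i \<and> theta n i < 1"
    and D: "D \<subseteq> {1..n}"
  shows "2 * exp_edges theta n D \<le> real (card D) * (real (card D) - 1) * (theta_max theta n)\<^sup>2"
    and "2 * exp_edges theta n D \<ge> real (card D) * (real (card D) - 1) * (theta_min theta n)\<^sup>2"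
proof -
  define P where "P = {(i,j). i \<in> D \<and> j \<in> D \<and> (i::nat) < j}"
  have fD: "finite D" using D finite_subset by blast
  have cP: "2 * real (card P) = real (card D) * (real (card D) - 1)"
    using card_pairs[OF fD] unfolding P_def
    by (metis (no_types, lifting) add_diff_cancel_right' of_nat_add of_nat_mult of_nat_numeral right_diff_distrib' mult.right_neutral)
  have up: "theta n i * theta n j \<le> (theta_max theta n)\<^sup>2" if "(i,j) \<in> P" for i j
  proof -
    have i: "i \<in> {1..n}" "j \<in> {1..n}" using that D unfolding P_def by auto
    have "theta n i \<le> theta_max theta n" "theta n j \<le> theta_max theta n"
      unfolding theta_max_def using i by auto
    then show ?thesis using th[OF i(1)] th[OF i(2)] unfolding power2_eq_square
      by (intro mult_mono) auto
  qed
  have lo: "(theta_min theta n)\<^sup>2 \<le> theta n i * theta n j" if "(i,j) \<in> P" for i j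
  proof -
    have i: "i \<in> {1..n}" "j \<in> {1..n}" using that D unfolding P_def by auto
    have "theta_min theta n \<le> theta n i" "theta_min theta n \<le> theta n j"
      unfolding theta_min_def using i by auto
    moreover have "theta_min theta n > 0" unfolding theta_min_def using i th
      by (subst Min_gr_iff) auto
    ultimately show ?thesis unfolding power2_eq_square
      by (intro mult_mono) auto
  qed
  have "exp_edges theta n D \<le> real (card P) * (theta_max theta n)\<^sup>2"
    unfolding exp_edges_def P_def[symmetric]
    by (rule sum_bounded_above) (use up in auto)
  then show "2 * exp_edges theta n D \<le> real (card D) * (real (card D) - 1) * (theta_max theta n)\<^sup>2"
    using cP by (metis mult.assoc mult_le_cancel_left_pos zero_less_numeral)
  have "exp_edges theta n D \<ge> real (card P) * (theta_min theta n)\<^sup>2"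
    unfolding exp_edges_def P_def[symmetric]
    by (rule sum_bounded_below) (use lo in auto)
  then show "2 * exp_edges theta n D \<ge> real (card D) * (real (card D) - 1) * (theta_min theta n)\<^sup>2"
    using cP by (metis mult.assoc mult_le_cancel_left_pos zero_less_numeral)
qed


theorem lemma1:
  fixes theta :: "nat \<Rightarrow> nat \<Rightarrow> real" and r :: "nat \<Rightarrow> nat"
  assumes theta_range: "\<And>n i. i \<in> {1..n} \<Longrightarrow> 0 < theta n i \<and> theta n i < 1"
    and assumption3: "(\<lambda>n. (theta_max theta n / theta_min theta n)\<^sup>2) \<in>
        o[sequentially](\<lambda>n. min (real (r n) powr (2/3))
                                   (real n / real (r n) * (theta_min theta n)\<^sup>2))"
  shows "\<forall>\<^sub>F n in sequentially. \<forall>C D. C \<subseteq> {1..n} \<and> card C = r n \<and> is_maximizer theta n C D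
            \<longrightarrow> real (card D) \<ge> real (r n) powr (1/3)"
proof -
  have ev1: "\<forall>\<^sub>F n in sequentially. norm ((theta_max theta n / theta_min theta n)\<^sup>2) \<le>
     1/2 * norm (min (real (r n) powr (2/3)) (real n / real (r n) * (theta_min theta n)\<^sup>2))"
    using landau_o.smallD[OF assumption3, of "1/2"] by simp
  have ev2: "\<forall>\<^sub>F n in sequentially. (1::nat) \<le> n" by (rule eventually_ge_at_top)
  show ?thesis
  proof (rule eventually_mono[OF eventually_conj[OF ev1 ev2]], safe)
    fix n C D
    assume bnd: "norm ((theta_max theta n / theta_min theta n)\<^sup>2) \<le>
     1/2 * norm (min (real (r n) powr (2/3)) (real n / real (r n) * (theta_min theta n)\<^sup>2))"
      and n1: "1 \<le> n" and C: "C \<subseteq> {1..n}" and cC: "card C = r n" and mx: "is_maximizer theta n C D"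
    define tM where "tM = theta_max theta n"
    define tm where "tm = theta_min theta n"
    define rho where "rho = tM / tm"
    define R where "R = real (r n)"
    define a where "a = R powr (2/3)"
    define b where "b = real n / R * tm\<^sup>2"
    have ne: "theta n ` {1..n} \<noteq> {}" using n1 by auto
    have tm0: "tm > 0" unfolding tm_def theta_min_def using theta_range ne
      by (subst Min_gr_iff) auto
    have tm1: "tm < 1" unfolding tm_def theta_min_def using theta_range ne n1
      by (subst Min_less_iff) auto
    have tmM: "tm \<le> tM" unfolding tm_def tM_def theta_min_def theta_max_def using ne
      by (meson Min_le Max_ge Min_in finite_atLeastAtMost finite_imageI order_trans)
    have rho1: "rho \<ge> 1" unfolding rho_def using tm0 tmM by simp
    have rho2: "rho\<^sup>2 \<ge> 1" using rho1 by (simp add: one_le_power)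
    have a0: "a \<ge> 0" unfolding a_def by simp
    have b0: "b \<ge> 0" unfolding b_def R_def by simp
    have bnd2: "rho\<^sup>2 \<le> 1/2 * min a b"
      using bnd a0 b0 unfolding rho_def a_def b_def R_def tM_def tm_def by simp
    have a2: "a \<ge> 2" and b2: "b \<ge> 2" using bnd2 rho2 by auto
    have r2: "r n \<ge> 2"
    proof (rule ccontr)
      assume "\<not> r n \<ge> 2"
      then have "R \<le> 1" "R \<ge> 0" unfolding R_def by auto
      then have "a \<le> 1" unfolding a_def
        by (intro powr_le1) auto
      then show False using a2 by simp
    qed
    have R2: "R \<ge> 2" unfolding R_def using r2 by simp
    have nR: "real n > R"
    proof -
      have "tm\<^sup>2 < 1" using tm0 tm1 by (simp add: power_less_one_iff)
      then have "b < real n / R" unfolding b_def using R2 n1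
        using mult_strict_left_mono[of "tm\<^sup>2" 1 "real n / R"] by simp
      then have "real n / R > 1" using b2 by simp
      then show ?thesis using R2 by (simp add: less_divide_eq)
    qed
    have key1: "rho\<^sup>2 \<le> a / 2" using bnd2 by simp
    have Rpow: "R powr (1/3) * a = R" unfolding a_def using R2
      by (simp add: powr_add[symmetric])
    have fC: "finite C" using C finite_subset by blast
    have DC: "D \<subseteq> C" "D \<noteq> {}" using mx unfolding is_maximizer_def by auto
    have Cne: "C \<noteq> {}" using cC r2 by auto
    have objle: "objective theta n C \<le> objective theta n D"
      using mx Cne unfolding is_maximizer_def by auto
    show "real (card D) \<ge> real (r n) powr (1/3)"
    proof (rule ccontr)
      assume "\<not> real (card D) \<ge> real (r n) powr (1/3)"
      then have dlt: "real (card D) < R powr (1/3)" unfolding R_def by simp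
      define d where "d = real (card D)"
      have fD: "finite D" using fC DC finite_subset by blast
      have d1: "d \<ge> 1" unfolding d_def using fD DC by (simp add: Suc_le_eq card_gt_0_iff)
      have dR: "d \<le> R" unfolding d_def R_def using card_mono[OF fC DC(1)] cC by simp
      define L where "L = ln (real n / R)"
      have L0: "L > 0" unfolding L_def using nR R2 by simp
      have LdL: "ln (real n / d) \<ge> L" unfolding L_def using d1 dR R2 nR
        by (subst ln_le_cancel_iff) (auto intro: divide_left_mono)
      define X where "X = (d - 1) * tM\<^sup>2 / 2"
      have X0: "X \<ge> 0" unfolding X_def using d1 by simp
      have DnC: "D \<subseteq> {1..n}" using DC C by auto
      have ED: "exp_edges theta n D \<le> d * X"
        using exp_edges_bounds(1)[where theta=theta, OF theta_range DnC] unfolding d_def X_def tM_def by simp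
      have EC: "exp_edges theta n C \<ge> R * ((R - 1) * tm\<^sup>2 / 2)"
        using exp_edges_bounds(2)[where theta=theta, OF theta_range C] unfolding R_def tm_def cC by simp
      have objD: "objective theta n D \<le> X / L"
      proof -
        have "objective theta n D = exp_edges theta n D / (d * ln (real n / d))"
          unfolding objective_def d_def ..
        also have "\<dots> \<le> (d * X) / (d * ln (real n / d))"
          using ED d1 L0 LdL by (intro divide_right_mono) auto
        also have "\<dots> = X / ln (real n / d)" using d1 by simp
        also have "\<dots> \<le> X / L" using X0 L0 LdL by (intro divide_left_mono) auto
        finally show ?thesis .
      qed
      have objC: "objective theta n C \<ge> ((R - 1) * tm\<^sup>2 / 2) / L"
      proof -
        have "((R - 1) * tm\<^sup>2 / 2) / L = (R * ((R - 1) * tm\<^sup>2 / 2)) / (R * L)"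
          using R2 by simp
        also have "\<dots> \<le> exp_edges theta n C / (R * L)"
          using EC R2 L0 by (intro divide_right_mono) auto
        also have "\<dots> = objective theta n C"
          unfolding objective_def L_def R_def cC ..
        finally show ?thesis .
      qed
      have "(d - 1) * rho\<^sup>2 < R powr (1/3) * rho\<^sup>2"
        using dlt rho2 unfolding d_def by (intro mult_strict_right_mono) auto
      also have "\<dots> \<le> R powr (1/3) * (a / 2)"
        using key1 by (intro mult_left_mono) auto
      also have "\<dots> = R / 2" using Rpow by simp
      also have "\<dots> \<le> R - 1" using R2 by simp
      finally have "(d - 1) * rho\<^sup>2 < R - 1" .
      then have "(d - 1) * rho\<^sup>2 * tm\<^sup>2 < (R - 1) * tm\<^sup>2"
        using tm0 by (intro mult_strict_right_mono) auto
      moreover have "rho\<^sup>2 * tm\<^sup>2 = tM\<^sup>2" unfolding rho_def using tm0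
        by (simp add: power_divide)
      ultimately have "(d - 1) * tM\<^sup>2 < (R - 1) * tm\<^sup>2" by (simp add: mult.assoc)
      then have "X < (R - 1) * tm\<^sup>2 / 2" unfolding X_def by simp
      then have "X / L < ((R - 1) * tm\<^sup>2 / 2) / L" using L0 divide_strict_right_mono by blast
      then show False using objD objC objle by simp
    qed
  qed
qed

end
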